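(* Let $\mathcal{P}=\{\xi\in\mathbb{R}^r: C\xi\le d\}$ be a compact polytope with $C\in\mathbb{R}^{q\times r}$ and $d\in\mathbb{R}^q$ with all entries strictly positive, and let $w\in\mathbb{R}^q$ have nonnegative entries with $C^\top\mathrm{diag}(1/d^1,\dots,1/d^q)(\mathds{1}+w)=0$. For $\delta\in(0,\min_i d^i]$ let $\hat{B}_{\mathcal{P}}(\xi)=\sum_{i=1}^q(1+w^i)\big(\hat{B}(-C^i\xi+d^i)+\ln d^i\big)$, where $\hat{B}(z)=-\ln z$ for $z>\delta$ and $\hat{B}(z)=\tfrac12[((z-2\delta)/\delta)^2-1]-\ln\delta$ for $z\le\delta$, and let $\bar{\beta}(\delta):=\min_{i\in\{1,\dots,q\},\,\xi\in\mathbb{R}^r}\{\hat{B}_{\mathcal{P}}(\xi): C^i\xi=d^i\}$. Then $\bar{\beta}(\cdot)$ is a continuous function of $\delta$, and for every such $\delta$ the sublevel set $\{\xi\in\mathbb{R}^r:\hat{B}_{\mathcal{P}}(\xi)\le\bar{\beta}(\delta)\}$ is contained in $\mathcal{P}$.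
   Context: $C^i$ and $d^i$ denote the $i$-th row of $C$ and $i$-th entry of $d$; $\mathds{1}$ is the all-ones vector. The relaxation parameter $\delta$ enters $\hat{B}_{\mathcal{P}}$ through $\hat{B}$. *)

theory Defs
  imports "HOL-Analysis.Analysis"
begin

definition polytope :: "real^'r^'q \<Rightarrow> real^'q \<Rightarrow> (real^'r) set" where
  "polytope C d = {\<xi>. \<forall>i. C $ i \<bullet> \<xi> \<le> d $ i}"

definition Bhat :: "real \<Rightarrow> real \<Rightarrow> real" where
  "Bhat \<delta> z = (if z > \<delta> then - ln z
                 else (1/2) * (((z - 2*\<delta>) / \<delta>)^2 - 1) - ln \<delta>)"

definition BhatP :: "real^'r^'q \<Rightarrow> real^'q \<Rightarrow> real^'q \<Rightarrow> real \<Rightarrow> real^'r \<Rightarrow> real" where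
  "BhatP C d w \<delta> \<xi> = (\<Sum>i\<in>UNIV. (1 + w $ i) * (Bhat \<delta> (- (C $ i \<bullet> \<xi>) + d $ i) + ln (d $ i)))"

text \<open>beta-bar(delta): the minimum (rendered as infimum) of BhatP over the facet hyperplanes.\<close>
definition betabar :: "real^'r^'q \<Rightarrow> real^'q \<Rightarrow> real^'q \<Rightarrow> real \<Rightarrow> real" where
  "betabar C d w \<delta> = Inf {BhatP C d w \<delta> \<xi> | i \<xi>. C $ i \<bullet> \<xi> = d $ i}"

end

theory Submission
  imports Defs
begin


lemma G_mono:
  fixes s1 s2 :: real
  assumes "0 < s1" "s1 \<le> s2"
  shows "(s1-2)^2/2 - 1/2 + ln s1 \<le> (s2-2)^2/2 - 1/2 + ln s2"
proof (rule DERIV_nonneg_imp_nondecreasing[OF assms(2)])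
  fix x assume x: "s1 \<le> x" "x \<le> s2"
  hence xp: "x > 0" using assms by auto
  have "DERIV (\<lambda>s. (s-2)^2/2 - 1/2 + ln s) x :> ((x - 2) + 1/x)"
    using xp by (auto intro!: derivative_eq_intros simp: power2_eq_square field_simps)
  moreover have "(x - 2) + 1/x \<ge> 0"
  proof -
    have "(x-2) + 1/x = (x-1)^2/x" using xp by (simp add: field_simps power2_eq_square)
    thus ?thesis using xp by simp
  qed
  ultimately show "\<exists>y. DERIV (\<lambda>s. (s-2)^2/2 - 1/2 + ln s) x :> y \<and> y \<ge> 0" by blast
qed

lemma Bhat_quad: "z \<le> \<delta> \<Longrightarrow> Bhat \<delta> z = (1/2) * (((z - 2*\<delta>) / \<delta>)^2 - 1) - ln \<delta>"
  by (simp add: Bhat_def)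
lemma Bhat_log: "z > \<delta> \<Longrightarrow> Bhat \<delta> z = - ln z"
  by (simp add: Bhat_def)

lemma ln_ge_1m: "0 < x \<Longrightarrow> 1 - 1/x \<le> ln (x::real)"
proof -
  assume x: "0 < x"
  have "ln (1/x) \<le> 1/x - 1" using x by (intro ln_le_minus_one) simp
  thus ?thesis using x by (simp add: ln_div)
qed

lemma aux_lnbound:
  fixes \<delta> c z :: real
  assumes "0 < \<delta>" "\<delta> \<le> c" "z \<le> \<delta>"
  shows "z * (1/\<delta> - 1/c) \<le> ln c - ln \<delta>"
proof -
  have c: "c > 0" using assms by simp
  have "1/\<delta> - 1/c \<ge> 0" using assms by (simp add: field_simps)
  hence "z * (1/\<delta> - 1/c) \<le> \<delta> * (1/\<delta> - 1/c)" by (rule mult_right_mono[OF assms(3)])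
  also have "\<dots> = 1 - 1/(c/\<delta>)" using assms c by (simp add: field_simps)
  also have "\<dots> \<le> ln (c/\<delta>)" using assms c by (intro ln_ge_1m) simp
  also have "\<dots> = ln c - ln \<delta>" using assms c by (simp add: ln_div)
  finally show ?thesis .
qed

lemma Bhat_tangent_d:
  fixes \<delta> c z :: real
  assumes "0 < \<delta>" "\<delta> \<le> c"
  shows "- ln c - (z - c)/c \<le> Bhat \<delta> z"
proof (cases "z > \<delta>")
  case True
  hence zp: "z > 0" using assms by simp
  have c: "c > 0" using assms by simp
  have "ln z - ln c \<le> (z - c)/c" using ln_diff_le[OF zp c] .
  thus ?thesis using True by (simp add: Bhat_log)
next
  case False
  hence z: "z \<le> \<delta>" by simp
  have c: "c > 0" using assms by simp
  define s where "s = 1 - z/\<delta>"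
  have s0: "s \<ge> 0" using z assms by (simp add: s_def field_simps)
  have "Bhat \<delta> z = s^2/2 + s - ln \<delta>"
    using z assms by (simp add: Bhat_quad s_def field_simps power2_eq_square)
  moreover have "- ln c - (z - c)/c \<le> s - ln \<delta>"
    using aux_lnbound[OF assms z] assms c by (simp add: s_def field_simps)
  moreover have "s^2/2 \<ge> 0" by simp
  ultimately show ?thesis by linarith
qed


definition DB :: "real \<Rightarrow> real \<Rightarrow> real" where
  "DB \<delta> c = (if c > \<delta> then - 1/c else (c - 2*\<delta>)/\<delta>^2)"

lemma Bhat_tangent:
  fixes \<delta> c z :: real
  assumes "0 < \<delta>"
  shows "Bhat \<delta> c + DB \<delta> c * (z - c) \<le> Bhat \<delta> z"
proof (cases "c > \<delta>")
  case True
  have "- ln c - (z - c)/c \<le> Bhat \<delta> z" using Bhat_tangent_d[OF assms] True by simp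
  thus ?thesis using True by (simp add: Bhat_log DB_def field_simps)
next
  case False
  hence c: "c \<le> \<delta>" by simp
  define Q where "Q = (\<lambda>x. (1/2) * (((x - 2*\<delta>) / \<delta>)^2 - 1) - ln \<delta>)"
  have Qid: "Bhat \<delta> c + DB \<delta> c * (x - c) = Q x - (x - c)^2/(2*\<delta>^2)" for x
    using c assms by (simp add: Bhat_quad DB_def Q_def field_simps power2_eq_square)
  show ?thesis
  proof (cases "z \<le> \<delta>")
    case True
    thus ?thesis using Qid[of z] by (simp add: Bhat_quad Q_def)
  next
    case False
    have "(z - \<delta>)^2 \<le> (z - c)^2" using c False by (intro power_mono) auto
    hence "(z - \<delta>)^2/(2*\<delta>^2) \<le> (z - c)^2/(2*\<delta>^2)" by (simp add: divide_right_mono)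
    moreover have "Q z - (z - \<delta>)^2/(2*\<delta>^2) = - ln \<delta> - (z - \<delta>)/\<delta>"
      using assms by (simp add: Q_def field_simps power2_eq_square)
    moreover have "- ln \<delta> - (z - \<delta>)/\<delta> \<le> Bhat \<delta> z" using Bhat_tangent_d[OF assms, of \<delta> z] by simp
    ultimately show ?thesis using Qid[of z] by linarith
  qed
qed

lemma Bhat_convex:
  fixes \<delta> a b t :: real
  assumes "0 < \<delta>" "0 \<le> t" "t \<le> 1"
  shows "Bhat \<delta> (t*a + (1-t)*b) \<le> t * Bhat \<delta> a + (1-t) * Bhat \<delta> b"
proof -
  define m where "m = t*a + (1-t)*b"
  have 1: "Bhat \<delta> m + DB \<delta> m * (a - m) \<le> Bhat \<delta> a" by (rule Bhat_tangent[OF assms(1)])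
  have 2: "Bhat \<delta> m + DB \<delta> m * (b - m) \<le> Bhat \<delta> b" by (rule Bhat_tangent[OF assms(1)])
  have "t * (Bhat \<delta> m + DB \<delta> m * (a - m)) + (1-t) * (Bhat \<delta> m + DB \<delta> m * (b - m))
       \<le> t * Bhat \<delta> a + (1-t) * Bhat \<delta> b"
    using mult_left_mono[OF 1 assms(2)] mult_left_mono[OF 2, of "1-t"] assms(3) by linarith
  moreover have "t * (Bhat \<delta> m + DB \<delta> m * (a - m)) + (1-t) * (Bhat \<delta> m + DB \<delta> m * (b - m)) = Bhat \<delta> m"
    by (simp add: m_def algebra_simps)
  ultimately show ?thesis by (simp add: m_def)
qed

lemma Bhat_decr:
  fixes \<delta> z1 z2 :: real
  assumes "0 < \<delta>" "z1 \<le> z2"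
  shows "Bhat \<delta> z2 \<le> Bhat \<delta> z1"
proof -
  have qd: "(1/2) * (((y - 2*\<delta>) / \<delta>)^2 - 1) \<le> (1/2) * (((x - 2*\<delta>) / \<delta>)^2 - 1)"
    if "x \<le> y" "y \<le> \<delta>" for x y
  proof -
    have "(2*\<delta> - y)^2 \<le> (2*\<delta> - x)^2" using that assms by (intro power_mono) auto
    hence "(y - 2*\<delta>)^2 \<le> (x - 2*\<delta>)^2" by (simp add: power2_commute)
    hence "(y - 2*\<delta>)^2/\<delta>^2 \<le> (x - 2*\<delta>)^2/\<delta>^2" by (simp add: divide_right_mono)
    hence "((y - 2*\<delta>)/\<delta>)^2 \<le> ((x - 2*\<delta>)/\<delta>)^2" by (simp only: power_divide)
    thus ?thesis by (intro mult_left_mono diff_right_mono) auto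
  qed
  show ?thesis
  proof (cases "z1 > \<delta>")
    case True
    thus ?thesis using assms by (simp add: Bhat_log)
  next
    case False
    show ?thesis
    proof (cases "z2 > \<delta>")
      case True
      have "- ln z2 \<le> - ln \<delta>" using True assms by simp
      moreover have "(1/2) * (((\<delta> - 2*\<delta>) / \<delta>)^2 - 1) = 0" using assms by (simp add: field_simps power2_eq_square)
      moreover have "(1/2) * (((\<delta> - 2*\<delta>) / \<delta>)^2 - 1) \<le> (1/2) * (((z1 - 2*\<delta>) / \<delta>)^2 - 1)"
        using False qd[of z1 \<delta>] by simp
      moreover have "Bhat \<delta> z1 = (1/2) * (((z1 - 2*\<delta>) / \<delta>)^2 - 1) - ln \<delta>"
        using False by (simp add: Bhat_quad)
      moreover have "Bhat \<delta> z2 = - ln z2" using True by (simp add: Bhat_log)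
      ultimately show ?thesis by linarith
    next
      case False2: False
      thus ?thesis using False qd[of z1 z2] assms by (simp add: Bhat_quad)
    qed
  qed
qed

lemma Bhat_scale:
  fixes \<delta> l z :: real
  assumes "0 < \<delta>" "0 < l"
  shows "Bhat (l*\<delta>) z = Bhat \<delta> (z/l) - ln l"
proof (cases "z > l*\<delta>")
  case True
  hence "z/l > \<delta>" using assms by (simp add: field_simps)
  moreover have "z > 0" using True assms by (smt (verit) mult_pos_pos)
  ultimately show ?thesis using True assms by (simp add: Bhat_log ln_div)
next
  case False
  hence "\<not> z/l > \<delta>" using assms by (simp add: field_simps)
  thus ?thesis using False assms by (simp add: Bhat_def ln_mult field_simps)
qed


lemma lin_help: "(A::real) \<le> B \<Longrightarrow> x \<le> y \<Longrightarrow> (A - 1)/2 - y \<le> (B-1)/2 - x"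
  by argo

lemma Bhat_G:
  fixes \<delta> z :: real
  assumes "0 < \<delta>" "0 < z" "z \<le> \<delta>"
  shows "Bhat \<delta> z = ((z/\<delta>)-2)^2/2 - 1/2 + ln (z/\<delta>) - ln z"
  using assms by (simp add: Bhat_quad ln_div diff_divide_distrib)

lemma Bhat_mono_delta:
  fixes \<delta> \<delta>' z :: real
  assumes "0 < \<delta>" "\<delta> \<le> \<delta>'"
  shows "Bhat \<delta>' z \<le> Bhat \<delta> z"
proof -
  have d': "0 < \<delta>'" using assms by simp
  show ?thesis
  proof (cases "z > \<delta>'")
    case True thus ?thesis using assms by (simp add: Bhat_log)
  next
    case False
    hence z': "z \<le> \<delta>'" by simp
    show ?thesis
    proof (cases "z \<le> 0")
      case True
      hence z: "z \<le> \<delta>" using assms by simp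
      have "z/\<delta> \<le> z/\<delta>'" using True assms d' by (simp add: divide_left_mono_neg)
      moreover have "z/\<delta>' \<le> 0" using True d' by (simp add: divide_nonpos_pos)
      ultimately have "(2 - z/\<delta>')^2 \<le> (2 - z/\<delta>)^2" by (intro power_mono) auto
      hence "((z - 2*\<delta>')/\<delta>')^2 \<le> ((z - 2*\<delta>)/\<delta>)^2"
        using assms d' by (simp add: diff_divide_distrib power2_commute)
      moreover have "ln \<delta> \<le> ln \<delta>'" using assms by simp
      ultimately show ?thesis using z z' by (simp add: Bhat_quad lin_help)
    next
      case False
      hence zp: "0 < z" by simp
      have G1: "Bhat \<delta>' z = ((z/\<delta>')-2)^2/2 - 1/2 + ln (z/\<delta>') - ln z"
        by (rule Bhat_G[OF d' zp z'])
      show ?thesis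
      proof (cases "z \<le> \<delta>")
        case True
        have "((z/\<delta>')-2)^2/2 - 1/2 + ln (z/\<delta>') \<le> ((z/\<delta>)-2)^2/2 - 1/2 + ln (z/\<delta>)"
          using zp assms d' by (intro G_mono) (auto simp: divide_left_mono)
        thus ?thesis using G1 Bhat_G[OF assms(1) zp True] by linarith
      next
        case False
        have "((z/\<delta>')-2)^2/2 - 1/2 + ln (z/\<delta>') \<le> (1-2)^2/2 - 1/2 + ln 1"
          using zp z' d' by (intro G_mono) auto
        thus ?thesis using G1 False by (simp add: Bhat_log)
      qed
    qed
  qed
qed

lemma Bhat_zero: "0 < \<delta> \<Longrightarrow> Bhat \<delta> 0 = 3/2 - ln \<delta>"
  by (simp add: Bhat_quad)

lemma psi_lower:
  fixes \<delta> c z :: real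
  assumes "0 < \<delta>" "\<delta> \<le> c" "z \<le> 0"
  shows "(1 - z/\<delta>)^2/2 \<le> Bhat \<delta> z + ln c - 1 + z/c"
proof -
  have c: "c > 0" using assms by simp
  define s where "s = 1 - z/\<delta>"
  have "Bhat \<delta> z = s^2/2 + s - ln \<delta>"
    using assms by (simp add: Bhat_quad s_def field_simps power2_eq_square)
  moreover have "0 \<le> s - ln \<delta> + ln c - 1 + z/c"
  proof -
    have "z * (1/\<delta> - 1/c) \<le> ln c - ln \<delta>" using aux_lnbound[OF assms(1,2)] assms by simp
    thus ?thesis unfolding s_def by argo
  qed
  ultimately show ?thesis unfolding s_def by argo
qed

lemma psi_nonneg:
  fixes \<delta> c z :: real
  assumes "0 < \<delta>" "\<delta> \<le> c"
  shows "0 \<le> Bhat \<delta> z + ln c - 1 + z/c"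
  using Bhat_tangent_d[OF assms, of z] assms by (simp add: field_simps)

lemma key_diff:
  fixes \<delta> l c z :: real
  assumes "0 < \<delta>" "1 \<le> l" "l*\<delta> \<le> c"
  shows "Bhat \<delta> z - Bhat (l*\<delta>) z \<le> ln l + 2*l*(l-1) * (Bhat (l*\<delta>) z + ln c - 1 + z/c)"
proof -
  have lp: "0 < l" using assms by simp
  have ld: "0 < l*\<delta>" using assms by simp
  have sc: "Bhat (l*\<delta>) z = Bhat \<delta> (z/l) - ln l" by (rule Bhat_scale[OF assms(1) lp])
  have psi0: "0 \<le> Bhat (l*\<delta>) z + ln c - 1 + z/c" by (rule psi_nonneg[OF ld assms(3)])
  have coef: "0 \<le> 2*l*(l-1)" using assms by simp
  show ?thesis
  proof (cases "z > 0")
    case True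
    have "z/l \<le> z" using True assms by (simp add: divide_le_eq)
    hence "Bhat \<delta> z \<le> Bhat \<delta> (z/l)" by (rule Bhat_decr[OF assms(1)])
    moreover have "0 \<le> 2*l*(l-1) * (Bhat (l*\<delta>) z + ln c - 1 + z/c)" using coef psi0 by simp
    ultimately show ?thesis using sc by linarith
  next
    case False
    hence z: "z \<le> 0" by simp
    define a where "a = - z/\<delta>"
    have a0: "a \<ge> 0" using z assms by (simp add: a_def divide_nonpos_pos)
    have zl: "z/l \<le> \<delta>" using z lp assms by (smt (verit) divide_nonpos_pos)
    have e1: "Bhat \<delta> z = (a+2)^2/2 - 1/2 - ln \<delta>"
      using z assms by (simp add: Bhat_quad a_def field_simps power2_eq_square)
    have e2: "Bhat \<delta> (z/l) = (a/l+2)^2/2 - 1/2 - ln \<delta>"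
      using zl assms lp by (simp add: Bhat_quad a_def field_simps power2_eq_square)
    have pl: "(1 + a/l)^2/2 \<le> Bhat (l*\<delta>) z + ln c - 1 + z/c"
      using psi_lower[OF ld assms(3) z] assms lp by (simp add: a_def field_simps)
    have "(a+2)^2/2 - (a/l+2)^2/2 = (l-1)*(a*((l+1)*a + 4*l)) / (2*l^2)"
      using lp by (simp add: field_simps power2_eq_square)
    also have "\<dots> \<le> (l-1) * (l*(l+a)^2) / l^2"
    proof -
      have "a*((l+1)*a + 4*l) \<le> 2*(l*(l+a)^2)"
      proof -
        have "(l+1)*a*a \<le> 2*l*a*a" using assms a0 by (intro mult_right_mono) auto
        moreover have "4*l*a \<le> 4*l*l*a" using assms a0 lp by (simp add: mult_left_mono mult_right_mono)
        moreover have "0 \<le> 2*l*l*l" using lp by simp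
        ultimately show ?thesis by (simp add: algebra_simps power2_eq_square)
      qed
      hence "(l-1)*(a*((l+1)*a + 4*l)) \<le> (l-1)*(2*(l*(l+a)^2))"
        using assms by (intro mult_left_mono) auto
      hence "(l-1)*(a*((l+1)*a + 4*l)) / (2*l^2) \<le> (l-1)*(2*(l*(l+a)^2)) / (2*l^2)"
        by (rule divide_right_mono) simp
      also have "\<dots> = (l-1) * (l*(l+a)^2) / l^2" by simp
      finally show ?thesis .
    qed
    also have "\<dots> = 2*l*(l-1) * ((1 + a/l)^2/2)"
      using lp by (simp add: field_simps power2_eq_square)
    also have "\<dots> \<le> 2*l*(l-1) * (Bhat (l*\<delta>) z + ln c - 1 + z/c)"
      using pl coef by (rule mult_left_mono)
    finally have "(a+2)^2/2 - (a/l+2)^2/2 \<le> 2*l*(l-1) * (Bhat (l*\<delta>) z + ln c - 1 + z/c)" .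
    thus ?thesis using sc e1 e2 by linarith
  qed
qed



lemma step_bound:
  fixes \<beta> :: "real \<Rightarrow> real" and W lo hi :: real
  assumes bd: "\<beta> lo \<le> (1 + 2*(hi/lo)*(hi/lo - 1)) * \<beta> hi + W * ln (hi/lo)"
    and "0 < lo" "lo \<le> hi" "hi \<le> 3*lo" "0 \<le> \<beta> hi" "0 \<le> W"
  shows "\<beta> lo - \<beta> hi \<le> (hi - lo)/lo * (6 * \<beta> hi + W)"
proof -
  define l where "l = hi/lo"
  have l1: "1 \<le> l" using assms by (simp add: l_def)
  have l3: "l \<le> 3" using assms by (simp add: l_def divide_le_eq)
  have "ln l \<le> l - 1" using l1 by (intro ln_le_minus_one) simp
  hence a: "W * ln l \<le> W * (l - 1)" using assms by (intro mult_left_mono) auto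
  have "2*l*(l-1) * \<beta> hi \<le> 6*(l-1)*\<beta> hi"
    using l1 l3 assms by (intro mult_right_mono) auto
  hence "\<beta> lo - \<beta> hi \<le> (l - 1) * (6 * \<beta> hi + W)"
    using bd a unfolding l_def[symmetric] by (simp add: algebra_simps)
  moreover have "l - 1 = (hi - lo)/lo" using assms by (simp add: l_def field_simps)
  ultimately show ?thesis by simp
qed

lemma cont_from_bounds:
  fixes \<beta> :: "real \<Rightarrow> real" and m W :: real
  assumes mono: "\<And>a b. a \<in> {0<..m} \<Longrightarrow> b \<in> {0<..m} \<Longrightarrow> a \<le> b \<Longrightarrow> \<beta> b \<le> \<beta> a"
    and nonneg: "\<And>a. a \<in> {0<..m} \<Longrightarrow> 0 \<le> \<beta> a"
    and W: "0 \<le> W"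
    and bd: "\<And>a b. a \<in> {0<..m} \<Longrightarrow> b \<in> {0<..m} \<Longrightarrow> a \<le> b \<Longrightarrow>
               \<beta> a \<le> (1 + 2*(b/a)*(b/a - 1)) * \<beta> b + W * ln (b/a)"
  shows "continuous_on {0<..m} \<beta>"
  unfolding continuous_on_iff
proof (intro ballI allI impI)
  fix x \<epsilon> :: real assume x: "x \<in> {0<..m}" and e: "0 < \<epsilon>"
  define M where "M = 6 * \<beta> x + W + 1"
  have M: "0 < M" using nonneg[OF x] W by (simp add: M_def)
  have xp: "0 < x" using x by simp
  define \<rho> where "\<rho> = min (x/2) (\<epsilon>*x/(2*M))"
  have \<rho>: "0 < \<rho>" using xp e M by (simp add: \<rho>_def)
  show "\<exists>\<rho>>0. \<forall>y\<in>{0<..m}. dist y x < \<rho> \<longrightarrow> dist (\<beta> y) (\<beta> x) < \<epsilon>"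
  proof (intro exI[of _ \<rho>] conjI ballI impI \<rho>)
    fix y assume y: "y \<in> {0<..m}" and dy: "dist y x < \<rho>"
    have dyx: "\<bar>y - x\<bar> < \<rho>" using dy by (simp add: dist_real_def)
    have r1: "\<rho> \<le> x/2" and r2: "\<rho> \<le> \<epsilon>*x/(2*M)" by (auto simp: \<rho>_def)
    have fin: "2*\<bar>y - x\<bar>/x * M < \<epsilon>"
    proof -
      have "2*\<bar>y - x\<bar>/x * M < 2*\<rho>/x*M" using dyx xp M by (simp add: divide_strict_right_mono)
      also have "\<dots> \<le> 2*(\<epsilon>*x/(2*M))/x*M" using r2 xp M
        by (intro mult_right_mono divide_right_mono) auto
      also have "\<dots> = \<epsilon>" using xp M by (simp add: field_simps)
      finally show ?thesis .
    qed
    show "dist (\<beta> y) (\<beta> x) < \<epsilon>"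
    proof (cases "x \<le> y")
      case True
      have yp: "0 < y" using y by simp
      have h3: "y \<le> 3*x" using dyx r1 True by simp
      have sb: "\<beta> x - \<beta> y \<le> (y - x)/x * (6 * \<beta> y + W)"
        using step_bound[OF bd[OF x y True] xp True h3 nonneg[OF y] W] .
      have "(y - x)/x * (6 * \<beta> y + W) \<le> 2*\<bar>y - x\<bar>/x * M"
      proof -
        have "6 * \<beta> y + W \<le> M" using mono[OF x y True] by (simp add: M_def)
        moreover have "0 \<le> (y - x)/x" using True xp by simp
        moreover have "(y-x)/x \<le> 2*\<bar>y - x\<bar>/x" using True xp by (simp add: divide_right_mono)
        moreover have "0 \<le> 6 * \<beta> y + W" using nonneg[OF y] W by simp
        ultimately have "(y - x)/x * (6 * \<beta> y + W) \<le> (2*\<bar>y - x\<bar>/x) * M"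
          using M by (intro mult_mono) auto
        thus ?thesis by simp
      qed
      moreover have "\<beta> y \<le> \<beta> x" using mono[OF x y True] .
      ultimately show ?thesis using sb fin by (simp add: dist_real_def)
    next
      case False
      hence yx: "y \<le> x" by simp
      have yp: "0 < y" using y by simp
      have yh: "x/2 \<le> y" using dyx r1 False by simp
      have h3: "x \<le> 3*y" using yh yp by argo
      have sb: "\<beta> y - \<beta> x \<le> (x - y)/y * (6 * \<beta> x + W)"
        using step_bound[OF bd[OF y x yx] yp yx h3 nonneg[OF x] W] .
      have "(x - y)/y * (6 * \<beta> x + W) \<le> 2*\<bar>y - x\<bar>/x * M"
      proof -
        have "6 * \<beta> x + W \<le> M" by (simp add: M_def)
        moreover have "0 \<le> (x - y)/y" using yx yp by simp
        moreover have "(x-y)/y \<le> 2*\<bar>y - x\<bar>/x"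
        proof -
          have "(x-y)/y \<le> (x-y)/(x/2)" using yx yp yh by (intro divide_left_mono) auto
          also have "\<dots> = 2*\<bar>y - x\<bar>/x" using yx xp by simp
          finally show ?thesis .
        qed
        moreover have "0 \<le> 6 * \<beta> x + W" using nonneg[OF x] W by simp
        ultimately have "(x - y)/y * (6 * \<beta> x + W) \<le> (2*\<bar>y - x\<bar>/x) * M"
          using M by (intro mult_mono) auto
        thus ?thesis by simp
      qed
      moreover have "\<beta> x \<le> \<beta> y" using mono[OF y x yx] .
      ultimately show ?thesis using sb fin by (simp add: dist_real_def)
    qed
  qed
qed



lemma wsum:
  fixes C :: "real^'r^'q" and d w :: "real^'q"
  assumes "transpose C *v (\<chi> i. (1 / d $ i) * (1 + w $ i)) = 0"
  shows "(\<Sum>j\<in>UNIV. ((1 / d $ j) * (1 + w $ j)) * (C $ j \<bullet> \<eta>)) = 0"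
proof -
  define a where "a = (\<chi> i. (1 / d $ i) * (1 + w $ i))"
  have "a v* C = 0" using assms by (simp add: a_def transpose_matrix_vector)
  hence "(a v* C) \<bullet> \<eta> = 0" by simp
  hence "a \<bullet> (C *v \<eta>) = 0" by (simp add: dot_lmul_matrix)
  moreover have "a \<bullet> (C *v \<eta>) = (\<Sum>j\<in>UNIV. ((1 / d $ j) * (1 + w $ j)) * (C $ j \<bullet> \<eta>))"
    by (simp add: a_def inner_vec_def matrix_vector_mult_def)
  ultimately show ?thesis by simp
qed

definition psi :: "real \<Rightarrow> real \<Rightarrow> real \<Rightarrow> real" where
  "psi \<delta> c z = Bhat \<delta> z + ln c - 1 + z / c"

lemma decomp:
  fixes C :: "real^'r^'q" and d w :: "real^'q"
  assumes "transpose C *v (\<chi> i. (1 / d $ i) * (1 + w $ i)) = 0"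
    and "\<forall>i. d $ i > 0"
  shows "BhatP C d w \<delta> \<eta> = (\<Sum>j\<in>UNIV. (1 + w $ j) * psi \<delta> (d $ j) (- (C $ j \<bullet> \<eta>) + d $ j))"
proof -
  have "(\<Sum>j\<in>UNIV. (1 + w $ j) * psi \<delta> (d $ j) (- (C $ j \<bullet> \<eta>) + d $ j))
      = (\<Sum>j\<in>UNIV. (1 + w $ j) * (Bhat \<delta> (- (C $ j \<bullet> \<eta>) + d $ j) + ln (d $ j))
                 - ((1 / d $ j) * (1 + w $ j)) * (C $ j \<bullet> \<eta>))"
  proof (rule sum.cong[OF refl])
    fix j
    have dj: "d $ j > 0" using assms(2) by simp
    show "(1 + w $ j) * psi \<delta> (d $ j) (- (C $ j \<bullet> \<eta>) + d $ j)
      = (1 + w $ j) * (Bhat \<delta> (- (C $ j \<bullet> \<eta>) + d $ j) + ln (d $ j))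
                 - ((1 / d $ j) * (1 + w $ j)) * (C $ j \<bullet> \<eta>)"
      using dj by (simp add: psi_def field_simps)
  qed
  also have "\<dots> = BhatP C d w \<delta> \<eta>"
    using wsum[OF assms(1), of \<eta>] by (simp add: sum_subtractf BhatP_def)
  finally show ?thesis by simp
qed

lemma f_nonneg:
  fixes C :: "real^'r^'q" and d w :: "real^'q"
  assumes "transpose C *v (\<chi> i. (1 / d $ i) * (1 + w $ i)) = 0"
    and "\<forall>i. d $ i > 0" "\<forall>i. w $ i \<ge> 0" "0 < \<delta>" "\<forall>i. \<delta> \<le> d $ i"
  shows "0 \<le> BhatP C d w \<delta> \<eta>"
  unfolding decomp[OF assms(1,2)]
proof (rule sum_nonneg)
  fix j
  have "0 \<le> psi \<delta> (d $ j) (- (C $ j \<bullet> \<eta>) + d $ j)"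
    unfolding psi_def using psi_nonneg[OF assms(4)] assms(5) by simp
  moreover have "0 \<le> 1 + w $ j" using assms(3) by (smt (verit))
  ultimately show "0 \<le> (1 + w $ j) * psi \<delta> (d $ j) (- (C $ j \<bullet> \<eta>) + d $ j)" by simp
qed

lemma f_hyper:
  fixes C :: "real^'r^'q" and d w :: "real^'q"
  assumes "transpose C *v (\<chi> i. (1 / d $ i) * (1 + w $ i)) = 0"
    and "\<forall>i. d $ i > 0" "\<forall>i. w $ i \<ge> 0" "0 < \<delta>" "\<forall>i. \<delta> \<le> d $ i"
    and h: "C $ i \<bullet> \<eta> = d $ i"
  shows "1/2 \<le> BhatP C d w \<delta> \<eta>"
proof -
  have nn: "0 \<le> (1 + w $ j) * psi \<delta> (d $ j) (- (C $ j \<bullet> \<eta>) + d $ j)" for j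
  proof -
    have "0 \<le> psi \<delta> (d $ j) (- (C $ j \<bullet> \<eta>) + d $ j)"
      unfolding psi_def using psi_nonneg[OF assms(4)] assms(5) by simp
    moreover have "0 \<le> 1 + w $ j" using assms(3) by (smt (verit))
    ultimately show ?thesis by simp
  qed
  have "psi \<delta> (d $ i) (- (C $ i \<bullet> \<eta>) + d $ i) = 1/2 + (ln (d $ i) - ln \<delta>)"
    using h assms(4) by (simp add: psi_def Bhat_zero)
  moreover have "ln \<delta> \<le> ln (d $ i)"
  proof -
    have "\<delta> \<le> d $ i" using assms(5) by simp
    thus ?thesis using assms(4) by simp
  qed
  ultimately have pi: "1/2 \<le> psi \<delta> (d $ i) (- (C $ i \<bullet> \<eta>) + d $ i)" by simp
  have "1/2 \<le> (1 + w $ i) * psi \<delta> (d $ i) (- (C $ i \<bullet> \<eta>) + d $ i)"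
  proof -
    have "psi \<delta> (d $ i) (- (C $ i \<bullet> \<eta>) + d $ i) \<le> (1 + w $ i) * psi \<delta> (d $ i) (- (C $ i \<bullet> \<eta>) + d $ i)"
      using pi assms(3) mult_right_mono[of 1 "1 + w $ i" "psi \<delta> (d $ i) (- (C $ i \<bullet> \<eta>) + d $ i)"] by simp
    thus ?thesis using pi by argo
  qed
  also have "\<dots> \<le> (\<Sum>j\<in>UNIV. (1 + w $ j) * psi \<delta> (d $ j) (- (C $ j \<bullet> \<eta>) + d $ j))"
    by (rule member_le_sum) (use nn in auto)
  finally show ?thesis unfolding decomp[OF assms(1,2)] .
qed

lemma Bhat_at_d: "0 < \<delta> \<Longrightarrow> \<delta> \<le> c \<Longrightarrow> Bhat \<delta> c + ln c = 0"
  by (cases "c > \<delta>") (auto simp: Bhat_def)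

lemma f_convex:
  fixes C :: "real^'r^'q" and d w :: "real^'q"
  assumes "\<forall>i. w $ i \<ge> 0" "0 < \<delta>" "\<forall>i. \<delta> \<le> d $ i" "0 \<le> t" "t \<le> 1"
  shows "BhatP C d w \<delta> (t *\<^sub>R \<xi>) \<le> t * BhatP C d w \<delta> \<xi>"
  unfolding BhatP_def sum_distrib_left
proof (rule sum_mono)
  fix j
  have w: "0 \<le> 1 + w $ j" using assms(1) by (smt (verit))
  have eq: "- (C $ j \<bullet> (t *\<^sub>R \<xi>)) + d $ j = t * (- (C $ j \<bullet> \<xi>) + d $ j) + (1 - t) * d $ j"
    by (simp add: algebra_simps)
  have "Bhat \<delta> (- (C $ j \<bullet> (t *\<^sub>R \<xi>)) + d $ j) \<le> t * Bhat \<delta> (- (C $ j \<bullet> \<xi>) + d $ j) + (1 - t) * Bhat \<delta> (d $ j)"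
    unfolding eq by (rule Bhat_convex[OF assms(2,4,5)])
  moreover have "Bhat \<delta> (d $ j) = - ln (d $ j)" using Bhat_at_d[OF assms(2)] assms(3) by (smt (verit))
  ultimately have "Bhat \<delta> (- (C $ j \<bullet> (t *\<^sub>R \<xi>)) + d $ j) + ln (d $ j) \<le> t * (Bhat \<delta> (- (C $ j \<bullet> \<xi>) + d $ j) + ln (d $ j))"
    by (simp add: algebra_simps)
  from mult_left_mono[OF this w]
  show "(1 + w $ j) * (Bhat \<delta> (- (C $ j \<bullet> (t *\<^sub>R \<xi>)) + d $ j) + ln (d $ j))
        \<le> t * ((1 + w $ j) * (Bhat \<delta> (- (C $ j \<bullet> \<xi>) + d $ j) + ln (d $ j)))"
    by (simp add: algebra_simps)
qed

lemma f_mono: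
  fixes C :: "real^'r^'q" and d w :: "real^'q"
  assumes "\<forall>i. w $ i \<ge> 0" "0 < \<delta>" "\<delta> \<le> \<delta>'"
  shows "BhatP C d w \<delta>' \<eta> \<le> BhatP C d w \<delta> \<eta>"
  unfolding BhatP_def
proof (rule sum_mono)
  fix j
  have w: "0 \<le> 1 + w $ j" using assms(1) by (smt (verit))
  show "(1 + w $ j) * (Bhat \<delta>' (- (C $ j \<bullet> \<eta>) + d $ j) + ln (d $ j))
     \<le> (1 + w $ j) * (Bhat \<delta> (- (C $ j \<bullet> \<eta>) + d $ j) + ln (d $ j))"
    using Bhat_mono_delta[OF assms(2,3)] w by (intro mult_left_mono) auto
qed

lemma f_bound:
  fixes C :: "real^'r^'q" and d w :: "real^'q"
  assumes "transpose C *v (\<chi> i. (1 / d $ i) * (1 + w $ i)) = 0"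
    and "\<forall>i. d $ i > 0" "\<forall>i. w $ i \<ge> 0" "0 < \<delta>" "\<delta> \<le> \<delta>'" "\<forall>i. \<delta>' \<le> d $ i"
  shows "BhatP C d w \<delta> \<eta> \<le> (1 + 2*(\<delta>'/\<delta>)*(\<delta>'/\<delta> - 1)) * BhatP C d w \<delta>' \<eta>
            + (\<Sum>j\<in>UNIV. 1 + w $ j) * ln (\<delta>'/\<delta>)"
proof -
  define l where "l = \<delta>'/\<delta>"
  have l1: "1 \<le> l" using assms by (simp add: l_def)
  have ld: "l * \<delta> = \<delta>'" using assms by (simp add: l_def)
  have tm: "(1 + w $ j) * (Bhat \<delta> (- (C $ j \<bullet> \<eta>) + d $ j) + ln (d $ j))
      \<le> (1 + w $ j) * (Bhat \<delta>' (- (C $ j \<bullet> \<eta>) + d $ j) + ln (d $ j))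
        + (1 + w $ j) * ln l + 2*l*(l-1) * ((1 + w $ j) * psi \<delta>' (d $ j) (- (C $ j \<bullet> \<eta>) + d $ j))" for j
  proof -
    have w: "0 \<le> 1 + w $ j" using assms(3) by (smt (verit))
    have "Bhat \<delta> (- (C $ j \<bullet> \<eta>) + d $ j) - Bhat (l*\<delta>) (- (C $ j \<bullet> \<eta>) + d $ j)
          \<le> ln l + 2*l*(l-1) * psi (l*\<delta>) (d $ j) (- (C $ j \<bullet> \<eta>) + d $ j)"
      unfolding psi_def using key_diff[OF assms(4) l1, of "d $ j"] ld assms(6) by simp
    from mult_left_mono[OF this w] show ?thesis unfolding ld by (simp add: algebra_simps)
  qed
  have "BhatP C d w \<delta> \<eta> \<le> (\<Sum>j\<in>UNIV. (1 + w $ j) * (Bhat \<delta>' (- (C $ j \<bullet> \<eta>) + d $ j) + ln (d $ j))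
        + (1 + w $ j) * ln l + 2*l*(l-1) * ((1 + w $ j) * psi \<delta>' (d $ j) (- (C $ j \<bullet> \<eta>) + d $ j)))"
    unfolding BhatP_def by (rule sum_mono) (rule tm)
  also have "\<dots> = (\<Sum>j\<in>UNIV. (1 + w $ j) * (Bhat \<delta>' (- (C $ j \<bullet> \<eta>) + d $ j) + ln (d $ j)))
        + (\<Sum>j\<in>UNIV. (1 + w $ j) * ln l) + (\<Sum>j\<in>UNIV. 2*l*(l-1) * ((1 + w $ j) * psi \<delta>' (d $ j) (- (C $ j \<bullet> \<eta>) + d $ j)))"
    by (simp only: sum.distrib)
  also have "\<dots> = BhatP C d w \<delta>' \<eta> + (\<Sum>j\<in>UNIV. 1 + w $ j) * ln l + 2*l*(l-1) * BhatP C d w \<delta>' \<eta>"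
    unfolding BhatP_def[of C d w \<delta>' \<eta>, symmetric] decomp[OF assms(1,2), of \<delta>' \<eta>]
    by (simp only: sum_distrib_left sum_distrib_right)
  finally show ?thesis by (simp add: l_def algebra_simps)
qed



theorem lemma2:
  fixes C :: "real^'r^'q" and d :: "real^'q" and w :: "real^'q"
  assumes "compact (polytope C d)"
    and "\<forall>i. d $ i > 0"
    and "\<forall>i. w $ i \<ge> 0"
    and "transpose C *v (\<chi> i. (1 / d $ i) * (1 + w $ i)) = 0"
  shows "continuous_on {0<..Min (range (\<lambda>i. d $ i))} (betabar C d w)
    \<and> (\<forall>\<delta>\<in>{0<..Min (range (\<lambda>i. d $ i))}.
          {\<xi>. BhatP C d w \<delta> \<xi> \<le> betabar C d w \<delta>} \<subseteq> polytope C d)"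
proof -
  define m where "m = Min (range (\<lambda>i. d $ i))"
  define S where "S = (\<lambda>\<delta>. {BhatP C d w \<delta> \<xi> | i \<xi>. C $ i \<bullet> \<xi> = d $ i})"
  have bS: "betabar C d w \<delta> = Inf (S \<delta>)" for \<delta> by (simp add: betabar_def S_def)
  have dmin: "\<delta> \<le> d $ i" if "\<delta> \<in> {0<..m}" for \<delta> i
  proof -
    have "m \<le> d $ i" unfolding m_def by (rule Min_le) auto
    thus ?thesis using that by simp
  qed
  have dpos: "0 < \<delta>" if "\<delta> \<in> {0<..m}" for \<delta> using that by simp
  have fnn: "0 \<le> BhatP C d w \<delta> \<xi>" if "\<delta> \<in> {0<..m}" for \<delta> \<xi>
    using f_nonneg[OF assms(4,2,3) dpos[OF that]] dmin[OF that] by blast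
  have fhy: "1/2 \<le> BhatP C d w \<delta> \<xi>" if "\<delta> \<in> {0<..m}" "C $ i \<bullet> \<xi> = d $ i" for \<delta> \<xi> i
    using f_hyper[OF assms(4,2,3) dpos[OF that(1)] _ that(2)] dmin[OF that(1)] by blast
  have bdd: "bdd_below (S \<delta>)" if "\<delta> \<in> {0<..m}" for \<delta>
    unfolding S_def using fnn[OF that] by (intro bdd_belowI[of _ 0]) auto
  have low: "betabar C d w \<delta> \<le> BhatP C d w \<delta> \<xi>" if "\<delta> \<in> {0<..m}" "C $ i \<bullet> \<xi> = d $ i" for \<delta> \<xi> i
    unfolding bS using that(2) by (intro cInf_lower[OF _ bdd[OF that(1)]]) (auto simp: S_def)
  have part2: "\<forall>\<delta>\<in>{0<..m}. {\<xi>. BhatP C d w \<delta> \<xi> \<le> betabar C d w \<delta>} \<subseteq> polytope C d"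
  proof (intro ballI subsetI)
    fix \<delta> \<xi> assume \<delta>: "\<delta> \<in> {0<..m}" and "\<xi> \<in> {\<xi>. BhatP C d w \<delta> \<xi> \<le> betabar C d w \<delta>}"
    hence fx: "BhatP C d w \<delta> \<xi> \<le> betabar C d w \<delta>" by simp
    show "\<xi> \<in> polytope C d"
    proof (rule ccontr)
      assume "\<xi> \<notin> polytope C d"
      then obtain i where i: "C $ i \<bullet> \<xi> > d $ i" by (auto simp: polytope_def not_le)
      define t where "t = d $ i / (C $ i \<bullet> \<xi>)"
      have di: "d $ i > 0" using assms(2) by simp
      have t0: "0 < t" and t1: "t < 1" using i di by (auto simp: t_def divide_less_eq)
      have hyp: "C $ i \<bullet> (t *\<^sub>R \<xi>) = d $ i" using i di by (simp add: t_def)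
      have a: "BhatP C d w \<delta> (t *\<^sub>R \<xi>) \<le> t * BhatP C d w \<delta> \<xi>"
        using f_convex[OF assms(3) dpos[OF \<delta>] _ less_imp_le[OF t0] less_imp_le[OF t1]] dmin[OF \<delta>] by blast
      have b: "t * BhatP C d w \<delta> \<xi> \<le> t * betabar C d w \<delta>" using fx t0 by simp
      have c: "betabar C d w \<delta> \<le> BhatP C d w \<delta> (t *\<^sub>R \<xi>)" by (rule low[OF \<delta> hyp])
      have e: "1/2 \<le> BhatP C d w \<delta> (t *\<^sub>R \<xi>)" by (rule fhy[OF \<delta> hyp])
      have "betabar C d w \<delta> * (1 - t) \<le> 0" using a b c by (simp add: algebra_simps)
      hence "betabar C d w \<delta> \<le> 0" using t1 by (simp add: mult_le_0_iff)
      hence "t * betabar C d w \<delta> \<le> 0" using t0 by (simp add: mult_le_0_iff)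
      thus False using a b e by argo
    qed
  qed
  have part1: "continuous_on {0<..m} (betabar C d w)"
  proof (cases "\<exists>i \<xi>. C $ i \<bullet> \<xi> = d $ i")
    case False
    hence "S \<delta> = {}" for \<delta> by (auto simp: S_def)
    hence "betabar C d w = (\<lambda>_. Inf {})" by (auto simp: bS)
    thus ?thesis by (simp add: continuous_on_const)
  next
    case True
    then obtain i0 \<xi>0 where h0: "C $ i0 \<bullet> \<xi>0 = d $ i0" by blast
    have ne: "S \<delta> \<noteq> {}" for \<delta> using h0 by (auto simp: S_def)
    define W where "W = (\<Sum>j\<in>UNIV. 1 + w $ j)"
    have W: "0 \<le> W" unfolding W_def using assms(3) by (intro sum_nonneg) (smt (verit))
    show ?thesis
    proof (rule cont_from_bounds[OF _ _ W])
      fix a b assume a: "a \<in> {0<..m}" and b: "b \<in> {0<..m}" and ab: "a \<le> b"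
      show "betabar C d w b \<le> betabar C d w a"
        unfolding bS[of a]
      proof (rule cInf_greatest[OF ne])
        fix x assume "x \<in> S a"
        then obtain i \<xi> where x: "x = BhatP C d w a \<xi>" and h: "C $ i \<bullet> \<xi> = d $ i" by (auto simp: S_def)
        have "betabar C d w b \<le> BhatP C d w b \<xi>" by (rule low[OF b h])
        also have "\<dots> \<le> BhatP C d w a \<xi>" by (rule f_mono[OF assms(3) dpos[OF a] ab])
        finally show "betabar C d w b \<le> x" using x by simp
      qed
    next
      fix a assume a: "a \<in> {0<..m}"
      show "0 \<le> betabar C d w a" unfolding bS
        by (rule cInf_greatest[OF ne]) (auto simp: S_def intro: fnn[OF a])
    next
      fix a b assume a: "a \<in> {0<..m}" and b: "b \<in> {0<..m}" and ab: "a \<le> b"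
      define A where "A = 1 + 2*(b/a)*(b/a - 1)"
      define B where "B = W * ln (b/a)"
      have A: "0 < A"
      proof -
        have "1 \<le> b/a" using a ab by simp
        hence "0 \<le> 2*(b/a)*(b/a - 1)" by (intro mult_nonneg_nonneg) auto
        thus ?thesis by (simp add: A_def)
      qed
      have "(betabar C d w a - B) / A \<le> Inf (S b)"
      proof (rule cInf_greatest[OF ne])
        fix x assume "x \<in> S b"
        then obtain i \<xi> where x: "x = BhatP C d w b \<xi>" and h: "C $ i \<bullet> \<xi> = d $ i" by (auto simp: S_def)
        have "betabar C d w a \<le> BhatP C d w a \<xi>" by (rule low[OF a h])
        also have "\<dots> \<le> A * BhatP C d w b \<xi> + B"
          unfolding A_def B_def W_def
          by (rule f_bound[OF assms(4,2,3) dpos[OF a] ab]) (use dmin[OF b] in blast)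
        finally show "(betabar C d w a - B) / A \<le> x" using A x by (simp add: divide_le_eq mult.commute)
      qed
      hence "betabar C d w a \<le> A * betabar C d w b + B" using A by (simp add: bS[of b] divide_le_eq mult.commute)
      thus "betabar C d w a \<le> (1 + 2*(b/a)*(b/a - 1)) * betabar C d w b + W * ln (b/a)"
        by (simp add: A_def B_def)
    qed
  qed
  show ?thesis using part1 part2 by (simp add: m_def)
qed


end
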